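(* Let $q\in\mathbb{R}$. For all $A,B\in M_2(\mathbb{C})$ with $\operatorname{tr}A=0$, $$\|AB-qBA\|_F^2\le (1+q^2)\,\|A\|_F^2\,\|B\|_F^2 .$$ The bound is sharp: for every $q$ there are $A,B\in M_2(\mathbb{C})$ with $\operatorname{tr}A=0$ and $B\neq0$ attaining equality.
   Context: $\|X\|_F=\sqrt{\operatorname{tr}(XX^\dagger)}$ denotes the Frobenius norm. *)

theory Defs
  imports "HOL-Analysis.Analysis"
begin

definition mat_trace :: "'a::comm_ring_1 ^'n::finite^'n \<Rightarrow> 'a" where
  "mat_trace A = (\<Sum>i\<in>UNIV. A $ i $ i)"

definition conj_transpose :: "complex^'n::finite^'m::finite \<Rightarrow> complex^'m^'n" where
  "conj_transpose A = (\<chi> i j. cnj (A $ j $ i))"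

text \<open>Frobenius norm: sqrt (tr (X X^dagger)); the trace is real and nonnegative.\<close>
definition frob_norm :: "complex^'n::finite^'n \<Rightarrow> real" where
  "frob_norm X = sqrt (Re (mat_trace (X ** conj_transpose X)))"

end

theory Submission
  imports Defs
begin

lemma key2:
  fixes q :: real and a11 a12 a21 b11 b12 b21 b22 :: complex
  shows "cmod ((a11*b11+a12*b21) - q*(b11*a11+b12*a21))^2
    + cmod ((a11*b12+a12*b22) - q*(b11*a12-b12*a11))^2
    + cmod ((a21*b11-a11*b21) - q*(b21*a11+b22*a21))^2
    + cmod ((a21*b12-a11*b22) - q*(b21*a12-b22*a11))^2
   \<le> (1+q^2) * (cmod a11^2 + cmod a12^2 + cmod a21^2 + cmod a11^2)
      * (cmod b11^2 + cmod b12^2 + cmod b21^2 + cmod b22^2)"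
proof -
  define x1 where "x1 = a12+a21"
  define x2 where "x2 = \<i>*(a12-a21)"
  define x3 where "x3 = 2*a11"
  define t where "t = b11+b22"
  define y1 where "y1 = cnj b12+cnj b21"
  define y2 where "y2 = -\<i>*(cnj b12-cnj b21)"
  define y3 where "y3 = cnj b11-cnj b22"
  define z1 where "z1 = \<i>*(1+q)*t*cnj x1 - (1-q)*cnj (x2*y3-x3*y2)"
  define z2 where "z2 = \<i>*(1+q)*t*cnj x2 - (1-q)*cnj (x3*y1-x1*y3)"
  define z3 where "z3 = \<i>*(1+q)*t*cnj x3 - (1-q)*cnj (x1*y2-x2*y1)"
  define v where "v = x1*y1+x2*y2+x3*y3"
  have nsq: "\<And>z::complex. (complex_of_real (cmod z))^2 = z * cnj z"
    by (metis complex_norm_square of_real_power)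
  have ii: "\<i>*\<i> = (-1::complex)" by simp
  have "complex_of_real (8*((1+q^2) * (cmod a11^2 + cmod a12^2 + cmod a21^2 + cmod a11^2)
      * (cmod b11^2 + cmod b12^2 + cmod b21^2 + cmod b22^2)
   - (cmod ((a11*b11+a12*b21) - q*(b11*a11+b12*a21))^2
    + cmod ((a11*b12+a12*b22) - q*(b11*a12-b12*a11))^2
    + cmod ((a21*b11-a11*b21) - q*(b21*a11+b22*a21))^2
    + cmod ((a21*b12-a11*b22) - q*(b21*a12-b22*a11))^2)))
   = complex_of_real (cmod z1^2 + cmod z2^2 + cmod z3^2 + (1+q)^2 * cmod v^2)"
    unfolding of_real_mult of_real_add of_real_diff of_real_power nsq
      z1_def z2_def z3_def v_def x1_def x2_def x3_def t_def y1_def y2_def y3_def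
    unfolding complex_cnj_mult complex_cnj_add complex_cnj_diff complex_cnj_complex_of_real
      complex_cnj_i complex_cnj_minus complex_cnj_numeral complex_cnj_one complex_cnj_cnj
      of_real_numeral of_real_1
    using ii by algebra
  then have "8*((1+q^2) * (cmod a11^2 + cmod a12^2 + cmod a21^2 + cmod a11^2)
      * (cmod b11^2 + cmod b12^2 + cmod b21^2 + cmod b22^2)
   - (cmod ((a11*b11+a12*b21) - q*(b11*a11+b12*a21))^2
    + cmod ((a11*b12+a12*b22) - q*(b11*a12-b12*a11))^2
    + cmod ((a21*b11-a11*b21) - q*(b21*a11+b22*a21))^2
    + cmod ((a21*b12-a11*b22) - q*(b21*a12-b22*a11))^2))
   = cmod z1^2 + cmod z2^2 + cmod z3^2 + (1+q)^2 * cmod v^2" (is "8*(?R - ?L) = ?S")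
    using of_real_eq_iff by blast
  moreover have "cmod z1^2 + cmod z2^2 + cmod z3^2 + (1+q)^2 * cmod v^2 \<ge> 0" by simp
  ultimately have "0 \<le> 8*(?R - ?L)" by simp
  then have "?L \<le> ?R" by simp
  then show ?thesis .
qed

lemma frob_sq:
  fixes X :: "complex^2^2"
  shows "(frob_norm X)^2 = cmod (X$1$1)^2 + cmod (X$1$2)^2 + cmod (X$2$1)^2 + cmod (X$2$2)^2"
proof -
  have "Re (mat_trace (X ** conj_transpose X)) = cmod (X$1$1)^2 + cmod (X$1$2)^2 + cmod (X$2$1)^2 + cmod (X$2$2)^2"
    unfolding mat_trace_def matrix_matrix_mult_def conj_transpose_def sum_2 cmod_power2
    by (simp add: power2_eq_square)
  then show ?thesis unfolding frob_norm_def by simp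
qed

theorem proposition3:
  fixes q :: real
  shows "(\<forall>A B :: complex^2^2. mat_trace A = 0 \<longrightarrow>
            (frob_norm (A ** B - q *\<^sub>R (B ** A)))\<^sup>2
              \<le> (1 + q\<^sup>2) * (frob_norm A)\<^sup>2 * (frob_norm B)\<^sup>2)
       \<and> (\<exists>A B :: complex^2^2. mat_trace A = 0 \<and> B \<noteq> 0 \<and>
            (frob_norm (A ** B - q *\<^sub>R (B ** A)))\<^sup>2
              = (1 + q\<^sup>2) * (frob_norm A)\<^sup>2 * (frob_norm B)\<^sup>2)"
proof (intro conjI allI impI)
  fix A B :: "complex^2^2"
  assume tr: "mat_trace A = 0"
  have A22: "A$2$2 = - A$1$1" using tr unfolding mat_trace_def sum_2 by (simp add: eq_neg_iff_add_eq_0 add.commute)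
  let ?X = "A ** B - q *\<^sub>R (B ** A)"
  have e11: "?X$1$1 = (A$1$1*B$1$1+A$1$2*B$2$1) - q*(B$1$1*A$1$1+B$1$2*A$2$1)"
    unfolding vector_minus_component vector_scaleR_component
    by (simp add: matrix_matrix_mult_def sum_2 scaleR_conv_of_real)
  have e12: "?X$1$2 = (A$1$1*B$1$2+A$1$2*B$2$2) - q*(B$1$1*A$1$2-B$1$2*A$1$1)"
    unfolding vector_minus_component vector_scaleR_component
    by (simp add: matrix_matrix_mult_def sum_2 scaleR_conv_of_real A22)
  have e21: "?X$2$1 = (A$2$1*B$1$1-A$1$1*B$2$1) - q*(B$2$1*A$1$1+B$2$2*A$2$1)"
    unfolding vector_minus_component vector_scaleR_component
    by (simp add: matrix_matrix_mult_def sum_2 scaleR_conv_of_real A22)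
  have e22: "?X$2$2 = (A$2$1*B$1$2-A$1$1*B$2$2) - q*(B$2$1*A$1$2-B$2$2*A$1$1)"
    unfolding vector_minus_component vector_scaleR_component
    by (simp add: matrix_matrix_mult_def sum_2 scaleR_conv_of_real A22)
  have nA: "(frob_norm A)^2 = cmod (A$1$1)^2 + cmod (A$1$2)^2 + cmod (A$2$1)^2 + cmod (A$1$1)^2"
    using frob_sq[of A] A22 by simp
  show "(frob_norm ?X)^2 \<le> (1 + q^2) * (frob_norm A)^2 * (frob_norm B)^2"
    unfolding frob_sq[of ?X] e11 e12 e21 e22 nA frob_sq[of B]
    by (rule key2)
next
  define A :: "complex^2^2" where "A = (\<chi> i j. if i = 1 \<and> j = 2 then 1 else 0)"
  define B :: "complex^2^2" where "B = (\<chi> i j. if i = 2 \<and> j = 1 then 1 else 0)"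
  have tr: "mat_trace A = 0" unfolding A_def mat_trace_def sum_2 by simp
  have B0: "B \<noteq> 0"
  proof
    assume "B = 0"
    then have "B$2$1 = 0" by simp
    then show False unfolding B_def by simp
  qed
  have eq: "(frob_norm (A ** B - q *\<^sub>R (B ** A)))\<^sup>2
              = (1 + q\<^sup>2) * (frob_norm A)\<^sup>2 * (frob_norm B)\<^sup>2"
    unfolding frob_sq vector_minus_component vector_scaleR_component
    by (simp add: A_def B_def matrix_matrix_mult_def sum_2 scaleR_conv_of_real)
  show "\<exists>A B :: complex^2^2. mat_trace A = 0 \<and> B \<noteq> 0 \<and>
            (frob_norm (A ** B - q *\<^sub>R (B ** A)))\<^sup>2
              = (1 + q\<^sup>2) * (frob_norm A)\<^sup>2 * (frob_norm B)\<^sup>2"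
    using tr B0 eq by blast
qed

end
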